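(* Let $\Omega$ be a finite set of $n$ items, let $k,l\ge 1$ be integers, and let $f_1,\dots,f_m:2^\Omega\to\mathbb{R}_{\ge 0}$ be monotone non-decreasing submodular functions. Then the algorithm $\textsf{Sampling-Greedy}$ returns a random set $S\subseteq\Omega$ with $|S|\le l$ such that $$\mathbb{E}_S[F(S)]\;\ge\;\frac{1-1/e^2}{2}\,F(O),$$ where $O\in\arg\max_{S'\subseteq\Omega,\ |S'|\le l}F(S')$.
   Context: Define $F(S)=\sum_{i=1}^m\max_{A\subseteq S,\ |A|\le k} f_i(A)$. Submodularity of $f_i$: $f_i(A\cup\{x\})-f_i(A)\ge f_i(A'\cup\{x\})-f_i(A')$ for $A\subseteq A'$, $x\notin A'$. Notation: add a set $\Phi$ of $l$ dummy items and let $\Omega'=\Omega\cup\Phi$; extend each $f_i$ by $f_i(A)=f_i(A\cap\Omega)$ for $A\subseteq\Omega'$. Let $\Delta_i(x,A)=f_i(A\cup\{x\})-f_i(A)$; for $y\in A$, $\nabla_i(x,y,A)=f_i((A\setminus\{y\})\cup\{x\})-f_i(A)$; for $|A|\le k$: $\nabla_i(x,A)=0$ if $x\in A$; $\nabla_i(x,A)=\max\{0,\max_{y\in A}\nabla_i(x,y,A),\Delta_i(x,A)\}$ if $x\notin A$, $|A|<k$; $\nabla_i(x,A)=\max\{0,\max_{y\in A}\nabla_i(x,y,A)\}$ if $x\notin A$, $|A|=k$. Define $\textsf{Rep}_i(x,A)$ to be $\emptyset$ if $\nabla_i(x,A)=0$, or if $\nabla_i(x,A)>0$, $|A|<k$ and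 $\max_{y\in A}\nabla_i(x,y,A)<\Delta_i(x,A)$; otherwise it is $\{y^*\}$ for some $y^*\in\arg\max_{y\in A}\nabla_i(x,y,A)$. $\textsf{Trim}(B,f_i)$: start with $A\leftarrow B$, go once through the elements of $B$ in a fixed order and remove an element $x$ currently in $A$ whenever $f_i(A)-f_i(A\setminus\{x\})<0$; return $A$. $\textsf{Sampling-Greedy}$: initialize $S\leftarrow\emptyset$ and $T_i\leftarrow\emptyset$ for all $i\in[m]$. Repeat $l$ times: let $M$ be a set of exactly $l$ items of $\Omega'$ maximizing $\sum_{x\in M}\sum_{i=1}^m\nabla_i(x,T_i)$; pick $x^*$ uniformly at random from $M$ and set $S\leftarrow S\cup\{x^*\}$; for each $i\in[m]$ with $\nabla_i(x^*,T_i)>0$, set $T_i\leftarrow (T_i\setminus\textsf{Rep}_i(x^*,T_i))\cup\{x^*\}$ and then $T_i\leftarrow\textsf{Trim}(T_i,f_i)$. Finally output $S$ with dummy items removed (i.e. $S\cap\Omega$). *)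

theory Defs
  imports "HOL-Probability.Probability_Mass_Function"
begin

text \<open>Items of the ground set have type 'a; the extended ground set
  Omega' = Omega \<union> Phi lives in type 'a + nat: real items are Inl x (x \<in> Omega),
  the l dummy items are Inr j (j < l).\<close>

definition groundExt :: "'a set \<Rightarrow> nat \<Rightarrow> ('a + nat) set" where
  "groundExt \<Omega> l = Inl ` \<Omega> \<union> Inr ` {..<l}"

definition Fobj :: "(nat \<Rightarrow> 'a set \<Rightarrow> real) \<Rightarrow> nat \<Rightarrow> nat \<Rightarrow> 'a set \<Rightarrow> real" where
  "Fobj f m k S = (\<Sum>i<m. Max (f i ` {A. A \<subseteq> S \<and> card A \<le> k}))"

definition fext :: "(nat \<Rightarrow> 'a set \<Rightarrow> real) \<Rightarrow> nat \<Rightarrow> ('a + nat) set \<Rightarrow> real" where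
  "fext f i A = f i (Inl -` A)"

definition Delta :: "(nat \<Rightarrow> 'a set \<Rightarrow> real) \<Rightarrow> nat \<Rightarrow> 'a + nat \<Rightarrow> ('a + nat) set \<Rightarrow> real" where
  "Delta f i x A = fext f i (insert x A) - fext f i A"

definition Nabla3 :: "(nat \<Rightarrow> 'a set \<Rightarrow> real) \<Rightarrow> nat \<Rightarrow> 'a + nat \<Rightarrow> 'a + nat \<Rightarrow> ('a + nat) set \<Rightarrow> real" where
  "Nabla3 f i x y A = fext f i (insert x (A - {y})) - fext f i A"

definition Nabla :: "(nat \<Rightarrow> 'a set \<Rightarrow> real) \<Rightarrow> nat \<Rightarrow> nat \<Rightarrow> 'a + nat \<Rightarrow> ('a + nat) set \<Rightarrow> real" where
  "Nabla f k i x A =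
     (if x \<in> A then 0
      else Max ({0} \<union> (\<lambda>y. Nabla3 f i x y A) ` A \<union> (if card A < k then {Delta f i x A} else {})))"

text \<open>Rep_i(x, A); the choice of y* in the argmax is made by the selector rsel.\<close>
definition Rep :: "(nat \<Rightarrow> 'a set \<Rightarrow> real) \<Rightarrow> nat \<Rightarrow>
    (nat \<Rightarrow> 'a + nat \<Rightarrow> ('a + nat) set \<Rightarrow> 'a + nat) \<Rightarrow>
    nat \<Rightarrow> 'a + nat \<Rightarrow> ('a + nat) set \<Rightarrow> ('a + nat) set" where
  "Rep f k rsel i x A =
     (if Nabla f k i x A = 0 \<or>
         (Nabla f k i x A > 0 \<and> card A < k \<and> (\<forall>y\<in>A. Nabla3 f i x y A < Delta f i x A))
      then {} else {rsel i x A})"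

fun trimPass :: "(('a + nat) set \<Rightarrow> real) \<Rightarrow> ('a + nat) list \<Rightarrow> ('a + nat) set \<Rightarrow> ('a + nat) set" where
  "trimPass g [] A = A"
| "trimPass g (x # xs) A =
     trimPass g xs (if x \<in> A \<and> g A - g (A - {x}) < 0 then A - {x} else A)"

text \<open>Trim(B, f_i), where ord is the fixed order on Omega' (a list enumerating it).\<close>
definition Trim :: "('a + nat) list \<Rightarrow> ('a + nat) set \<Rightarrow> (('a + nat) set \<Rightarrow> real) \<Rightarrow> ('a + nat) set" where
  "Trim ord B g = trimPass g (filter (\<lambda>x. x \<in> B) ord) B"

type_synonym 'a sg_state = "('a + nat) set \<times> (nat \<Rightarrow> ('a + nat) set)"

definition sgStep :: "(nat \<Rightarrow> 'a set \<Rightarrow> real) \<Rightarrow> nat \<Rightarrow> nat \<Rightarrow>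
    ('a sg_state \<Rightarrow> ('a + nat) set) \<Rightarrow>
    (nat \<Rightarrow> 'a + nat \<Rightarrow> ('a + nat) set \<Rightarrow> 'a + nat) \<Rightarrow> ('a + nat) list \<Rightarrow>
    'a sg_state \<Rightarrow> 'a sg_state pmf" where
  "sgStep f m k selM rsel ord st =
     map_pmf (\<lambda>x. (insert x (fst st),
                   \<lambda>i. if i < m \<and> Nabla f k i x (snd st i) > 0
                       then Trim ord ((snd st i - Rep f k rsel i x (snd st i)) \<union> {x}) (fext f i)
                       else snd st i))
       (pmf_of_set (selM st))"

definition samplingGreedy :: "(nat \<Rightarrow> 'a set \<Rightarrow> real) \<Rightarrow> nat \<Rightarrow> nat \<Rightarrow> nat \<Rightarrow>
    ('a sg_state \<Rightarrow> ('a + nat) set) \<Rightarrow>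
    (nat \<Rightarrow> 'a + nat \<Rightarrow> ('a + nat) set \<Rightarrow> 'a + nat) \<Rightarrow> ('a + nat) list \<Rightarrow> 'a set pmf" where
  "samplingGreedy f m k l selM rsel ord =
     map_pmf (\<lambda>st. Inl -` fst st)
       (((\<lambda>p. bind_pmf p (sgStep f m k selM rsel ord)) ^^ l) (return_pmf ({}, \<lambda>i. {})))"

text \<open>Admissible tie-breaking: selM returns a set of exactly l items of Omega'
  maximizing sum_{x \<in> M} sum_i Nabla_i(x, T_i).\<close>
definition validSelM :: "(nat \<Rightarrow> 'a set \<Rightarrow> real) \<Rightarrow> nat \<Rightarrow> nat \<Rightarrow> 'a set \<Rightarrow> nat \<Rightarrow>
    ('a sg_state \<Rightarrow> ('a + nat) set) \<Rightarrow> bool" where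
  "validSelM f m k \<Omega> l selM \<longleftrightarrow>
     (\<forall>st. selM st \<subseteq> groundExt \<Omega> l \<and> card (selM st) = l \<and>
        (\<forall>M'. M' \<subseteq> groundExt \<Omega> l \<and> card M' = l \<longrightarrow>
           (\<Sum>x\<in>M'. \<Sum>i<m. Nabla f k i x (snd st i)) \<le>
           (\<Sum>x\<in>selM st. \<Sum>i<m. Nabla f k i x (snd st i))))"

definition validRsel :: "(nat \<Rightarrow> 'a set \<Rightarrow> real) \<Rightarrow>
    (nat \<Rightarrow> 'a + nat \<Rightarrow> ('a + nat) set \<Rightarrow> 'a + nat) \<Rightarrow> bool" where
  "validRsel f rsel \<longleftrightarrow>
     (\<forall>i x A. finite A \<and> A \<noteq> {} \<longrightarrow>
        rsel i x A \<in> A \<and> (\<forall>y\<in>A. Nabla3 f i x y A \<le> Nabla3 f i x (rsel i x A) A))"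

end

theory Submission
  imports Defs
begin


locale sgl =
  fixes \<Omega> :: "'a set" and k l m :: nat and f :: "nat \<Rightarrow> 'a set \<Rightarrow> real"
  assumes fin: "finite \<Omega>"
    and k1: "k \<ge> 1" and l1: "l \<ge> 1"
    and nonneg: "\<And>i A. i < m \<Longrightarrow> A \<subseteq> \<Omega> \<Longrightarrow> f i A \<ge> 0"
    and mono: "\<And>i A B. i < m \<Longrightarrow> A \<subseteq> B \<Longrightarrow> B \<subseteq> \<Omega> \<Longrightarrow> f i A \<le> f i B"
    and submod: "\<And>i A A' x. i < m \<Longrightarrow> A \<subseteq> A' \<Longrightarrow> A' \<subseteq> \<Omega> \<Longrightarrow> x \<in> \<Omega> \<Longrightarrow> x \<notin> A' \<Longrightarrow>
                   f i (insert x A) - f i A \<ge> f i (insert x A') - f i A'"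
begin

abbreviation "U \<equiv> groundExt \<Omega> l"

lemma finU: "finite U" using fin by (simp add: groundExt_def)

lemma vim_sub: "A \<subseteq> U \<Longrightarrow> Inl -` A \<subseteq> \<Omega>"
  by (auto simp: groundExt_def)

lemma g_nonneg: "i < m \<Longrightarrow> A \<subseteq> U \<Longrightarrow> fext f i A \<ge> 0"
  unfolding fext_def using nonneg vim_sub by blast

lemma g_mono: "i < m \<Longrightarrow> A \<subseteq> B \<Longrightarrow> B \<subseteq> U \<Longrightarrow> fext f i A \<le> fext f i B"
  unfolding fext_def using mono vim_sub by (meson vimage_mono)

lemma g_sub: assumes "i < m" "A \<subseteq> A'" "A' \<subseteq> U" "x \<in> U" "x \<notin> A'"
  shows "fext f i (insert x A) - fext f i A \<ge> fext f i (insert x A') - fext f i A'"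
proof (cases x)
  case (Inl a)
  have "a \<in> \<Omega>" using assms(4) Inl by (auto simp: groundExt_def)
  moreover have "a \<notin> Inl -` A'" using assms(5) Inl by auto
  moreover have "Inl -` insert x A = insert a (Inl -` A)" "Inl -` insert x A' = insert a (Inl -` A')"
    using Inl by auto
  ultimately show ?thesis unfolding fext_def
    using submod[OF assms(1), of "Inl -` A" "Inl -` A'" a] vim_sub[OF assms(3)] assms(2) vimage_mono[OF assms(2), of Inl] by auto
next
  case (Inr b)
  then have "Inl -` insert x A = Inl -` A" "Inl -` insert x A' = Inl -` A'" by auto
  then show ?thesis unfolding fext_def by simp
qed

lemma Nabla_set_fin: "finite A \<Longrightarrow> finite ({0} \<union> (\<lambda>y. Nabla3 f i x y A) ` A \<union> (if card A < k then {Delta f i x A} else {}))"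
  by auto

lemma Nabla_ge0: "finite A \<Longrightarrow> Nabla f k i x A \<ge> 0"
  unfolding Nabla_def by (auto intro: Max_ge)

lemma Nabla_ge_Delta: "finite A \<Longrightarrow> x \<notin> A \<Longrightarrow> card A < k \<Longrightarrow> Delta f i x A \<le> Nabla f k i x A"
  unfolding Nabla_def by (auto intro: Max_ge)

lemma Nabla_ge_N3: "finite A \<Longrightarrow> x \<notin> A \<Longrightarrow> y \<in> A \<Longrightarrow> Nabla3 f i x y A \<le> Nabla f k i x A"
  unfolding Nabla_def by (auto intro: Max_ge)

lemma sum_Delta:
  assumes "i < m" "finite B" "B \<subseteq> U" "T \<subseteq> U" "B \<inter> T = {}"
  shows "(\<Sum>x\<in>B. Delta f i x T) \<ge> fext f i (B \<union> T) - fext f i T"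
  using assms(2,3,5)
proof (induction B rule: finite_induct)
  case empty then show ?case by simp
next
  case (insert x B)
  have "fext f i (insert x (B \<union> T)) - fext f i (B \<union> T) \<le> fext f i (insert x T) - fext f i T"
    using g_sub[OF assms(1), of T "B \<union> T" x] insert assms(4) by auto
  then show ?case using insert by (simp add: Delta_def)
qed

lemma sum_back:
  assumes "i < m" "finite T" "T \<subseteq> U" "Y \<subseteq> T"
  shows "(\<Sum>y\<in>Y. fext f i T - fext f i (T - {y})) \<le> fext f i T - fext f i (T - Y)"
proof -
  have "finite Y" using assms finite_subset by blast
  then show ?thesis using assms(4)
  proof (induction Y rule: finite_induct)
    case empty then show ?case by simp
  next
    case (insert y Y)
    have "fext f i (insert y (T - insert y Y)) - fext f i (T - insert y Y)
          \<ge> fext f i (insert y (T - {y})) - fext f i (T - {y})"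
      using g_sub[OF assms(1), of "T - insert y Y" "T - {y}" y] insert assms by auto
    moreover have "insert y (T - insert y Y) = T - Y" "insert y (T - {y}) = T" using insert by auto
    ultimately show ?case using insert by simp
  qed
qed

lemma N3_bound:
  assumes "i < m" "T \<subseteq> U" "y \<in> T" "x \<in> U" "x \<notin> T"
  shows "Nabla3 f i x y T \<ge> Delta f i x T - (fext f i T - fext f i (T - {y}))"
  using g_sub[OF assms(1), of "T - {y}" T x] assms
  unfolding Nabla3_def Delta_def by auto

lemma exch:
  assumes "i < m" "finite T" "T \<subseteq> U" "card T \<le> k" "Ob \<subseteq> U" "card Ob \<le> k"
  shows "(\<Sum>x\<in>Ob - T. Nabla f k i x T) \<ge> fext f i Ob - 2 * fext f i T"
proof -
  have finO: "finite Ob" using assms(5) finU finite_subset by blast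
  have OT: "(Ob - T) \<union> T = Ob \<union> T" by auto
  have sd: "(\<Sum>x\<in>Ob - T. Delta f i x T) \<ge> fext f i (Ob \<union> T) - fext f i T"
    using sum_Delta[OF assms(1), of "Ob - T" T] finO assms OT by auto
  have gO: "fext f i Ob \<le> fext f i (Ob \<union> T)" using g_mono assms by auto
  have gT: "fext f i T \<ge> 0" using g_nonneg assms by auto
  show ?thesis
  proof (cases "card T < k")
    case True
    have "(\<Sum>x\<in>Ob - T. Delta f i x T) \<le> (\<Sum>x\<in>Ob - T. Nabla f k i x T)"
      by (rule sum_mono) (use Nabla_ge_Delta assms True in auto)
    then show ?thesis using sd gO gT by linarith
  next
    case False
    then have cT: "card T = k" using assms by auto
    have "card Ob = card (Ob \<inter> T) + card (Ob - T)" using finO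
      by (metis Int_Diff_disjoint Int_Diff_Un card_Un_disjoint finite_Diff finite_Int)
    moreover have "card T = card (Ob \<inter> T) + card (T - Ob)" using assms(2)
      by (metis Int_Diff_disjoint Int_Diff_Un card_Un_disjoint finite_Diff finite_Int inf_commute)
    ultimately have "card (Ob - T) \<le> card (T - Ob)" using cT assms(6) by linarith
    then obtain \<pi> where pi: "\<pi> ` (Ob - T) \<subseteq> T - Ob" "inj_on \<pi> (Ob - T)"
      using card_le_inj[of "Ob - T" "T - Ob"] finO assms(2) by auto
    have "(\<Sum>x\<in>Ob - T. Delta f i x T - (fext f i T - fext f i (T - {\<pi> x})))
          \<le> (\<Sum>x\<in>Ob - T. Nabla f k i x T)"
    proof (rule sum_mono)
      fix x assume x: "x \<in> Ob - T"
      then have "\<pi> x \<in> T" using pi by auto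
      then show "Delta f i x T - (fext f i T - fext f i (T - {\<pi> x})) \<le> Nabla f k i x T"
        using N3_bound[OF assms(1,3) _ _, of "\<pi> x" x] Nabla_ge_N3[OF assms(2), of x "\<pi> x" i] x assms(5)
        by force
    qed
    moreover have "(\<Sum>x\<in>Ob - T. fext f i T - fext f i (T - {\<pi> x}))
        = (\<Sum>y\<in>\<pi> ` (Ob - T). fext f i T - fext f i (T - {y}))"
      using sum.reindex[OF pi(2), of "\<lambda>y. fext f i T - fext f i (T - {y})"] by simp
    moreover have "(\<Sum>y\<in>\<pi> ` (Ob - T). fext f i T - fext f i (T - {y})) \<le> fext f i T - fext f i (T - \<pi> ` (Ob - T))"
      using sum_back[OF assms(1,2,3)] pi by auto
    moreover have "fext f i (T - \<pi> ` (Ob - T)) \<ge> 0" using g_nonneg[OF assms(1), of "T - \<pi> ` (Ob - T)"] assms(3) by blast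
    ultimately show ?thesis using sd gO gT by (simp add: sum_subtractf)
  qed
qed


lemma trimPass_id: "(\<And>x. x \<in> A \<Longrightarrow> g A - g (A - {x}) \<ge> 0) \<Longrightarrow> trimPass g xs A = A"
proof (induction xs)
  case (Cons a xs)
  have "\<not> (a \<in> A \<and> g A - g (A - {a}) < 0)" using Cons.prems by force
  then have "(if a \<in> A \<and> g A - g (A - {a}) < 0 then A - {a} else A) = A" by (simp only: if_False)
  then show ?case using Cons by simp
qed simp

lemma trim_id: "i < m \<Longrightarrow> A \<subseteq> U \<Longrightarrow> Trim ord A (fext f i) = A"
  unfolding Trim_def by (rule trimPass_id) (use g_mono in auto)

lemma upd:
  assumes i: "i < m" and fT: "finite T" and TU: "T \<subseteq> U" and cT: "card T \<le> k" and xU: "x \<in> U"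
    and pos: "Nabla f k i x T > 0" and rs: "validRsel f rsel"
  defines "T' \<equiv> (T - Rep f k rsel i x T) \<union> {x}"
  shows "T' \<subseteq> insert x T \<and> card T' \<le> k \<and> fext f i T' = fext f i T + Nabla f k i x T"
proof -
  have xT: "x \<notin> T" using pos unfolding Nabla_def by auto
  define S0 where "S0 = {0} \<union> (\<lambda>y. Nabla3 f i x y T) ` T \<union> (if card T < k then {Delta f i x T} else {})"
  have NS: "Nabla f k i x T = Max S0" unfolding Nabla_def S0_def using xT by simp
  have fS: "finite S0" "S0 \<noteq> {}" unfolding S0_def using fT by auto
  have MS: "Max S0 \<in> S0" using Max_in[OF fS] .
  have geS: "\<And>v. v \<in> S0 \<Longrightarrow> v \<le> Max S0" using Max_ge[OF fS(1)] by blast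
  have memS0: "\<And>v. v \<in> S0 \<longleftrightarrow> v = 0 \<or> (\<exists>y\<in>T. v = Nabla3 f i x y T) \<or> (card T < k \<and> v = Delta f i x T)"
    unfolding S0_def by auto
  obtain M0 where M0: "M0 = Max S0" by blast
  have MS': "M0 = 0 \<or> (\<exists>y\<in>T. M0 = Nabla3 f i x y T) \<or> (card T < k \<and> M0 = Delta f i x T)"
    using MS memS0 M0 by blast
  show ?thesis
  proof (cases "card T < k \<and> (\<forall>y\<in>T. Nabla3 f i x y T < Delta f i x T)")
    case True
    then have R: "Rep f k rsel i x T = {}" unfolding Rep_def using pos by auto
    have DS: "Delta f i x T \<in> S0" using memS0 True by auto
    have "Max S0 = Delta f i x T"
    proof -
      have "M0 \<noteq> 0" using pos NS M0 by simp
      moreover have "\<not> (\<exists>y\<in>T. M0 = Nabla3 f i x y T)"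
        using True geS[OF DS] M0 by force
      ultimately show ?thesis using MS' M0 by auto
    qed
    then show ?thesis unfolding T'_def R using True NS fT xT
      by (simp add: Delta_def card_insert_if)
  next
    case False
    have Tne: "T \<noteq> {}" using False k1 by auto
    have R: "Rep f k rsel i x T = {rsel i x T}" unfolding Rep_def using pos False by auto
    have ys: "rsel i x T \<in> T" "\<forall>y\<in>T. Nabla3 f i x y T \<le> Nabla3 f i x (rsel i x T) T"
      using rs fT Tne unfolding validRsel_def by auto
    have "Max S0 = Nabla3 f i x (rsel i x T) T"
    proof (rule antisym)
      show "Nabla3 f i x (rsel i x T) T \<le> Max S0" using geS ys memS0 by blast
    next
      have "M0 \<noteq> 0" using pos NS M0 by simp
      then have "Max S0 \<in> (\<lambda>y. Nabla3 f i x y T) ` T \<or> (card T < k \<and> Max S0 = Delta f i x T)"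
        using MS' M0 by auto
      then show "Max S0 \<le> Nabla3 f i x (rsel i x T) T"
      proof
        assume "Max S0 \<in> (\<lambda>y. Nabla3 f i x y T) ` T" then show ?thesis using ys by auto
      next
        assume D: "card T < k \<and> Max S0 = Delta f i x T"
        then obtain y where "y \<in> T" "Nabla3 f i x y T \<ge> Delta f i x T" using False by force
        then show ?thesis using ys D by force
      qed
    qed
    moreover have "T' = insert x (T - {rsel i x T})" unfolding T'_def R by auto
    moreover have "card (insert x (T - {rsel i x T})) = card T"
      using ys(1) xT fT by (simp add: card_insert_if) (metis Suc_pred card_gt_0_iff empty_iff)
    ultimately show ?thesis using NS cT by (auto simp: Nabla3_def)
  qed
qed

end

locale sgl2 = sgl \<Omega> k l m f for \<Omega> :: "'a set" and k l m f +
  fixes selM :: "'a sg_state \<Rightarrow> ('a + nat) set"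
    and rsel :: "nat \<Rightarrow> 'a + nat \<Rightarrow> ('a + nat) set \<Rightarrow> 'a + nat"
    and ord :: "('a + nat) list" and Opt :: "'a set"
  assumes selM_ok: "validSelM f m k \<Omega> l selM"
    and rsel_ok: "validRsel f rsel"
    and O_sub: "Opt \<subseteq> \<Omega>" and O_card: "card Opt \<le> l"
begin

definition Phi :: "'a sg_state \<Rightarrow> real" where "Phi st = (\<Sum>i<m. fext f i (snd st i))"
definition Inv :: "nat \<Rightarrow> 'a sg_state \<Rightarrow> bool" where
  "Inv t st \<longleftrightarrow> fst st \<subseteq> U \<and> card (fst st) \<le> t \<and> (\<forall>i<m. snd st i \<subseteq> fst st \<and> card (snd st i) \<le> k)"
definition nxt :: "'a sg_state \<Rightarrow> 'a + nat \<Rightarrow> 'a sg_state" where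
  "nxt st x = (insert x (fst st),
                   \<lambda>i. if i < m \<and> Nabla f k i x (snd st i) > 0
                       then Trim ord ((snd st i - Rep f k rsel i x (snd st i)) \<union> {x}) (fext f i)
                       else snd st i)"

lemma sgStep_eq: "sgStep f m k selM rsel ord st = map_pmf (nxt st) (pmf_of_set (selM st))"
  unfolding sgStep_def nxt_def by simp

lemma selM_props: "selM st \<subseteq> U" "card (selM st) = l" "finite (selM st)" "selM st \<noteq> {}"
proof -
  show 1: "selM st \<subseteq> U" "card (selM st) = l" using selM_ok unfolding validSelM_def by blast+
  then show "finite (selM st)" "selM st \<noteq> {}" using l1 by (auto intro: card_ge_0_finite)
qed

lemma nxt_props:
  assumes inv: "Inv t st" and xU: "x \<in> U"
  shows "Inv (Suc t) (nxt st x) \<and> Phi (nxt st x) = Phi st + (\<Sum>i<m. Nabla f k i x (snd st i))"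
proof -
  have SU: "fst st \<subseteq> U" using inv Inv_def by auto
  have per: "snd (nxt st x) i \<subseteq> insert x (fst st) \<and> card (snd (nxt st x) i) \<le> k \<and>
      fext f i (snd (nxt st x) i) = fext f i (snd st i) + Nabla f k i x (snd st i)" if i: "i < m" for i
  proof -
    let ?T = "snd st i"
    have TS: "?T \<subseteq> fst st" "card ?T \<le> k" using inv i Inv_def by auto
    have TU: "?T \<subseteq> U" using TS SU by auto
    have fT: "finite ?T" using TU finU finite_subset by blast
    show ?thesis
    proof (cases "Nabla f k i x ?T > 0")
      case True
      define T' where "T' = (?T - Rep f k rsel i x ?T) \<union> {x}"
      have u: "T' \<subseteq> insert x ?T \<and> card T' \<le> k \<and> fext f i T' = fext f i ?T + Nabla f k i x ?T"
        using upd[OF i fT TU TS(2) xU True rsel_ok] unfolding T'_def by blast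
      have "T' \<subseteq> U" using u TU xU by auto
      then have "snd (nxt st x) i = T'" unfolding nxt_def T'_def using True i trim_id by simp
      then show ?thesis using u TS by auto
    next
      case False
      then have "Nabla f k i x ?T = 0" using Nabla_ge0[OF fT] by (meson not_le order_antisym)
      then show ?thesis unfolding nxt_def using False TS by auto
    qed
  qed
  have "card (insert x (fst st)) \<le> Suc t" using inv unfolding Inv_def
    using finU finite_subset[OF SU] by (simp add: card_insert_if)
  then have "Inv (Suc t) (nxt st x)" using per SU xU unfolding Inv_def nxt_def by auto
  moreover have "Phi (nxt st x) = Phi st + (\<Sum>i<m. Nabla f k i x (snd st i))"
    unfolding Phi_def using per by (simp add: sum.distrib)
  ultimately show ?thesis by blast
qed


abbreviation "OPT \<equiv> Fobj f m k Opt"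

lemma finOpt: "finite Opt" using O_sub fin finite_subset by blast

lemma Oi_ex: "\<exists>Oi. Oi \<subseteq> Opt \<and> card Oi \<le> k \<and> f i Oi = Max (f i ` {A. A \<subseteq> Opt \<and> card A \<le> k})"
proof -
  have "finite {A. A \<subseteq> Opt \<and> card A \<le> k}" using finOpt by simp
  moreover have "{} \<in> {A. A \<subseteq> Opt \<and> card A \<le> k}" by simp
  ultimately have "Max (f i ` {A. A \<subseteq> Opt \<and> card A \<le> k}) \<in> f i ` {A. A \<subseteq> Opt \<and> card A \<le> k}"
    by (intro Max_in) auto
  then show ?thesis by auto
qed

lemma key_sum:
  assumes inv: "Inv t st"
  shows "(\<Sum>x\<in>selM st. \<Sum>i<m. Nabla f k i x (snd st i)) \<ge> OPT - 2 * Phi st"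
proof -
  define M' where "M' = Inl ` Opt \<union> Inr ` {..<l - card Opt}"
  have M'U: "M' \<subseteq> U" unfolding M'_def groundExt_def using O_sub by auto
  have finM': "finite M'" unfolding M'_def using finOpt by simp
  have "card M' = card (Inl ` Opt :: ('a + nat) set) + card (Inr ` {..<l - card Opt} :: ('a + nat) set)"
    unfolding M'_def using finOpt by (intro card_Un_disjoint) auto
  also have "\<dots> = l" using O_card by (simp add: card_image)
  finally have cM': "card M' = l" .
  have le1: "(\<Sum>x\<in>M'. \<Sum>i<m. Nabla f k i x (snd st i)) \<le> (\<Sum>x\<in>selM st. \<Sum>i<m. Nabla f k i x (snd st i))"
    using selM_ok M'U cM' unfolding validSelM_def by blast
  have SU: "fst st \<subseteq> U" using inv Inv_def by auto
  have per: "(\<Sum>x\<in>M'. Nabla f k i x (snd st i)) \<ge> Max (f i ` {A. A \<subseteq> Opt \<and> card A \<le> k}) - 2 * fext f i (snd st i)"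
    if i: "i < m" for i
  proof -
    let ?T = "snd st i"
    have TS: "?T \<subseteq> fst st" "card ?T \<le> k" using inv i Inv_def by auto
    have TU: "?T \<subseteq> U" using TS SU by auto
    have fT: "finite ?T" using TU finU finite_subset by blast
    obtain Oi where Oi: "Oi \<subseteq> Opt" "card Oi \<le> k" "f i Oi = Max (f i ` {A. A \<subseteq> Opt \<and> card A \<le> k})"
      using Oi_ex by blast
    have OiU: "Inl ` Oi \<subseteq> U" using Oi O_sub unfolding groundExt_def by auto
    have cOi: "card (Inl ` Oi :: ('a + nat) set) \<le> k" using Oi by (simp add: card_image)
    have "fext f i (Inl ` Oi) - 2 * fext f i ?T \<le> (\<Sum>x\<in>Inl ` Oi - ?T. Nabla f k i x ?T)"
      using exch[OF i fT TU TS(2) OiU cOi] .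
    also have "\<dots> \<le> (\<Sum>x\<in>M'. Nabla f k i x ?T)"
      by (rule sum_mono2[OF finM']) (use Oi M'_def Nabla_ge0[OF fT] in auto)
    finally show ?thesis using Oi(3) unfolding fext_def by (simp add: inj_vimage_image_eq)
  qed
  have "OPT - 2 * Phi st = (\<Sum>i<m. Max (f i ` {A. A \<subseteq> Opt \<and> card A \<le> k}) - 2 * fext f i (snd st i))"
    unfolding Fobj_def Phi_def by (simp add: sum_subtractf sum_distrib_left)
  also have "\<dots> \<le> (\<Sum>i<m. \<Sum>x\<in>M'. Nabla f k i x (snd st i))"
    by (rule sum_mono) (use per in auto)
  also have "\<dots> = (\<Sum>x\<in>M'. \<Sum>i<m. Nabla f k i x (snd st i))" by (rule sum.swap)
  finally show ?thesis using le1 by linarith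
qed

lemma step_exp:
  assumes inv: "Inv t st"
  shows "measure_pmf.expectation (sgStep f m k selM rsel ord st) Phi \<ge> Phi st + (OPT - 2 * Phi st) / l"
    and "measure_pmf.expectation (sgStep f m k selM rsel ord st) Phi \<ge> Phi st"
    and "finite (set_pmf (sgStep f m k selM rsel ord st))"
    and "\<And>s. s \<in> set_pmf (sgStep f m k selM rsel ord st) \<Longrightarrow> Inv (Suc t) s"
proof -
  let ?M = "selM st"
  let ?N = "\<lambda>x. \<Sum>i<m. Nabla f k i x (snd st i)"
  have M: "?M \<subseteq> U" "card ?M = l" "finite ?M" "?M \<noteq> {}" using selM_props by auto
  have E: "measure_pmf.expectation (sgStep f m k selM rsel ord st) Phi = (\<Sum>x\<in>?M. Phi (nxt st x)) / l"
    unfolding sgStep_eq integral_map_pmf using integral_pmf_of_set[OF M(4,3)] M(2) by simp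
  also have "\<dots> = (\<Sum>x\<in>?M. Phi st + ?N x) / l"
    using nxt_props[OF inv] M(1) by (intro arg_cong[where f="\<lambda>v. v / l"] sum.cong) auto
  also have "\<dots> = Phi st + (\<Sum>x\<in>?M. ?N x) / l"
    using M(2) l1 by (simp add: sum.distrib field_simps)
  finally have E2: "measure_pmf.expectation (sgStep f m k selM rsel ord st) Phi = Phi st + (\<Sum>x\<in>?M. ?N x) / l" .
  have "(\<Sum>x\<in>?M. ?N x) \<ge> OPT - 2 * Phi st" using key_sum[OF inv] .
  then show "measure_pmf.expectation (sgStep f m k selM rsel ord st) Phi \<ge> Phi st + (OPT - 2 * Phi st) / l"
    unfolding E2 using l1 by (simp add: divide_right_mono)
  have SU: "fst st \<subseteq> U" using inv Inv_def by auto
  have "(\<Sum>x\<in>?M. ?N x) \<ge> 0"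
  proof (intro sum_nonneg)
    fix x i assume "i \<in> {..<m}"
    then have "finite (snd st i)" using inv SU finU finite_subset unfolding Inv_def by (meson lessThan_iff order_trans)
    then show "Nabla f k i x (snd st i) \<ge> 0" by (rule Nabla_ge0)
  qed
  then show "measure_pmf.expectation (sgStep f m k selM rsel ord st) Phi \<ge> Phi st"
    unfolding E2 by simp
  show "finite (set_pmf (sgStep f m k selM rsel ord st))"
    unfolding sgStep_eq using M by simp
  show "\<And>s. s \<in> set_pmf (sgStep f m k selM rsel ord st) \<Longrightarrow> Inv (Suc t) s"
    unfolding sgStep_eq using M nxt_props[OF inv] by auto
qed


abbreviation "P t \<equiv> ((\<lambda>p. bind_pmf p (sgStep f m k selM rsel ord)) ^^ t) (return_pmf ({}, \<lambda>i. {}))"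

lemma P_inv: "finite (set_pmf (P t)) \<and> (\<forall>st\<in>set_pmf (P t). Inv t st)"
proof (induction t)
  case 0 then show ?case by (simp add: Inv_def)
next
  case (Suc t)
  have eq: "P (Suc t) = bind_pmf (P t) (sgStep f m k selM rsel ord)" by simp
  show ?case unfolding eq set_bind_pmf using Suc step_exp(3,4) by auto
qed

lemma P_rec:
  shows "measure_pmf.expectation (P (Suc t)) Phi \<ge> (1 - 2 / l) * measure_pmf.expectation (P t) Phi + OPT / l"
    and "measure_pmf.expectation (P (Suc t)) Phi \<ge> measure_pmf.expectation (P t) Phi"
proof -
  let ?A = "set_pmf (P t)"
  have fA: "finite ?A" and inv: "\<And>st. st \<in> ?A \<Longrightarrow> Inv t st" using P_inv by auto
  have eq: "P (Suc t) = bind_pmf (P t) (sgStep f m k selM rsel ord)" by simp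
  have E1: "measure_pmf.expectation (P (Suc t)) Phi =
      (\<Sum>a\<in>?A. pmf (P t) a * measure_pmf.expectation (sgStep f m k selM rsel ord a) Phi)"
    unfolding eq by (subst pmf_expectation_bind[OF fA _ order_refl]) (use step_exp(3) inv in blast, simp)
  have E0: "measure_pmf.expectation (P t) Phi = (\<Sum>a\<in>?A. Phi a * pmf (P t) a)"
    by (rule integral_measure_pmf_real[OF fA]) auto
  have S1: "(\<Sum>a\<in>?A. pmf (P t) a) = 1" by (rule sum_pmf_eq_1[OF fA order_refl])
  have "(\<Sum>a\<in>?A. pmf (P t) a * (Phi a + (OPT - 2 * Phi a) / l))
        \<le> measure_pmf.expectation (P (Suc t)) Phi"
    unfolding E1 by (rule sum_mono) (rule mult_left_mono, use step_exp(1) inv in blast, simp)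
  moreover have "(\<Sum>a\<in>?A. pmf (P t) a * (Phi a + (OPT - 2 * Phi a) / l))
       = (1 - 2 / l) * (\<Sum>a\<in>?A. Phi a * pmf (P t) a) + OPT / l * (\<Sum>a\<in>?A. pmf (P t) a)"
  proof -
    have "(\<Sum>a\<in>?A. pmf (P t) a * (Phi a + (OPT - 2 * Phi a) / l))
        = (\<Sum>a\<in>?A. (1 - 2 / l) * (Phi a * pmf (P t) a) + OPT / l * pmf (P t) a)"
      by (rule sum.cong) (simp_all add: algebra_simps diff_divide_distrib add_divide_distrib)
    then show ?thesis by (simp add: sum.distrib sum_distrib_left)
  qed
  ultimately show "measure_pmf.expectation (P (Suc t)) Phi \<ge> (1 - 2 / l) * measure_pmf.expectation (P t) Phi + OPT / l"
    using E0 S1 by simp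
  have "(\<Sum>a\<in>?A. pmf (P t) a * Phi a) \<le> measure_pmf.expectation (P (Suc t)) Phi"
    unfolding E1 by (rule sum_mono) (rule mult_left_mono, use step_exp(2) inv in blast, simp)
  then show "measure_pmf.expectation (P (Suc t)) Phi \<ge> measure_pmf.expectation (P t) Phi"
    using E0 by (simp add: mult.commute)
qed

end

lemma recur:
  fixes a :: "nat \<Rightarrow> real" and l :: nat and OPT :: real
  assumes l1: "l \<ge> 1" and O0: "OPT \<ge> 0" and a0: "a 0 \<ge> 0"
    and r1: "\<And>t. a (Suc t) \<ge> (1 - 2 / l) * a t + OPT / l"
    and r2: "\<And>t. a (Suc t) \<ge> a t"
  shows "a l \<ge> (1 - 1 / exp 2) / 2 * OPT"
proof (cases "l = 1")
  case True
  have "a 1 \<ge> - a 0 + OPT" using r1[of 0] True by simp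
  moreover have "a 1 \<ge> a 0" using r2[of 0] by simp
  moreover have "(1 - 1 / exp 2) / 2 * OPT \<le> OPT / 2"
  proof -
    have "(1 - 1 / exp 2) \<le> (1::real)" by simp
    then have "(1 - 1 / exp 2) * OPT \<le> 1 * OPT" using O0 by (rule mult_right_mono)
    then show ?thesis by simp
  qed
  ultimately show ?thesis using True by simp
next
  case False
  then have l2: "l \<ge> 2" using l1 by auto
  define c where "c = 1 - 2 / real l"
  have c0: "c \<ge> 0" unfolding c_def using l2 by (simp add: field_simps)
  have h: "OPT / 2 - a t \<le> c ^ t * (OPT / 2 - a 0)" for t
  proof (induction t)
    case 0 then show ?case by simp
  next
    case (Suc t)
    have "OPT / 2 - a (Suc t) \<le> c * (OPT / 2 - a t)"
      using r1[of t] l2 unfolding c_def by (simp add: field_simps)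
    also have "\<dots> \<le> c * (c ^ t * (OPT / 2 - a 0))" using Suc c0 by (rule mult_left_mono)
    finally show ?case by simp
  qed
  have "c ^ l * (OPT / 2 - a 0) \<le> c ^ l * (OPT / 2)" using a0 c0 by (intro mult_left_mono) auto
  moreover have "c ^ l \<le> exp (-2)"
  proof -
    have "c \<le> exp (- 2 / real l)" unfolding c_def using exp_ge_add_one_self[of "- 2 / real l"] by simp
    then have "c ^ l \<le> exp (- 2 / real l) ^ l" using c0 by (rule power_mono)
    also have "\<dots> = exp (real l * (- 2 / real l))" by (rule exp_of_nat_mult[symmetric])
    also have "\<dots> = exp (-2)" using l2 by simp
    finally show ?thesis .
  qed
  then have "c ^ l * (OPT / 2) \<le> exp (-2) * (OPT / 2)" using O0 by (simp add: mult_right_mono)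
  moreover have "exp (-2::real) = 1 / exp 2" by (simp add: exp_minus field_simps)
  ultimately have "OPT / 2 - a l \<le> 1 / exp 2 * (OPT / 2)" using h[of l] by (metis order_trans)
  moreover have "(1 - 1 / exp 2) / 2 * OPT = OPT / 2 - 1 / exp 2 * (OPT / 2)" by (simp add: field_simps)
  ultimately show ?thesis by linarith
qed

context sgl2 begin

lemma card_vim: "finite X \<Longrightarrow> card (Inl -` X :: 'a set) \<le> card (X :: ('a + nat) set)"
proof -
  assume fX: "finite X"
  have "card (Inl -` X) = card (Inl ` (Inl -` X) :: ('a + nat) set)" by (rule card_image[symmetric]) simp
  also have "\<dots> \<le> card X" using fX by (intro card_mono) auto
  finally show ?thesis .
qed

lemma F_ge_Phi:
  assumes inv: "Inv t st" shows "Phi st \<le> Fobj f m k (Inl -` fst st)"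
  unfolding Phi_def Fobj_def
proof (rule sum_mono)
  fix i assume "i \<in> {..<m}"
  then have i: "i < m" by simp
  have SU: "fst st \<subseteq> U" using inv Inv_def by auto
  have fS: "finite (fst st)" using SU finU finite_subset by blast
  have TS: "snd st i \<subseteq> fst st" "card (snd st i) \<le> k" using inv i Inv_def by auto
  have "Inl -` snd st i \<in> {A. A \<subseteq> Inl -` fst st \<and> card A \<le> k}"
    using TS card_vim[of "snd st i"] fS finite_subset by fastforce
  moreover have "finite {A. A \<subseteq> Inl -` fst st \<and> card A \<le> k}"
    using fS by (simp add: finite_vimageI)
  ultimately show "fext f i (snd st i) \<le> Max (f i ` {A. A \<subseteq> Inl -` fst st \<and> card A \<le> k})"
    unfolding fext_def by (intro Max_ge) auto
qed

lemma OPT_nonneg: "OPT \<ge> 0"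
  unfolding Fobj_def
proof (rule sum_nonneg)
  fix i assume "i \<in> {..<m}"
  then have i: "i < m" by simp
  have "finite {A. A \<subseteq> Opt \<and> card A \<le> k}" using finOpt by simp
  then have "f i {} \<le> Max (f i ` {A. A \<subseteq> Opt \<and> card A \<le> k})" by (intro Max_ge) auto
  moreover have "f i {} \<ge> 0" using nonneg i by auto
  ultimately show "0 \<le> Max (f i ` {A. A \<subseteq> Opt \<and> card A \<le> k})" by linarith
qed

lemma final:
  "(\<forall>S \<in> set_pmf (samplingGreedy f m k l selM rsel ord). S \<subseteq> \<Omega> \<and> card S \<le> l)
       \<and> measure_pmf.expectation (samplingGreedy f m k l selM rsel ord) (Fobj f m k)
           \<ge> (1 - 1 / exp 2) / 2 * OPT"
proof
  have SG: "samplingGreedy f m k l selM rsel ord = map_pmf (\<lambda>st. Inl -` fst st) (P l)"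
    unfolding samplingGreedy_def by simp
  have fA: "finite (set_pmf (P l))" and inv: "\<And>st. st \<in> set_pmf (P l) \<Longrightarrow> Inv l st"
    using P_inv by auto
  show "\<forall>S \<in> set_pmf (samplingGreedy f m k l selM rsel ord). S \<subseteq> \<Omega> \<and> card S \<le> l"
  proof
    fix S assume "S \<in> set_pmf (samplingGreedy f m k l selM rsel ord)"
    then obtain st where st: "st \<in> set_pmf (P l)" "S = Inl -` fst st" unfolding SG by auto
    have SU: "fst st \<subseteq> U" "card (fst st) \<le> l" using inv[OF st(1)] Inv_def by auto
    have "finite (fst st)" using SU finU finite_subset by blast
    then show "S \<subseteq> \<Omega> \<and> card S \<le> l" using st(2) vim_sub[OF SU(1)] card_vim SU(2) by (metis order_trans)
  qed
  define a where "a t = measure_pmf.expectation (P t) Phi" for t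
  have a0: "a 0 \<ge> 0" unfolding a_def Phi_def by (simp, rule sum_nonneg, use g_nonneg in auto)
  have "a l \<ge> (1 - 1 / exp 2) / 2 * OPT"
    by (rule recur[where a=a, OF l1 OPT_nonneg a0]) (use P_rec in \<open>auto simp: a_def\<close>)
  moreover have "a l \<le> measure_pmf.expectation (samplingGreedy f m k l selM rsel ord) (Fobj f m k)"
  proof -
    have "a l = (\<Sum>st\<in>set_pmf (P l). Phi st * pmf (P l) st)"
      unfolding a_def by (rule integral_measure_pmf_real[OF fA]) auto
    also have "\<dots> \<le> (\<Sum>st\<in>set_pmf (P l). Fobj f m k (Inl -` fst st) * pmf (P l) st)"
      by (rule sum_mono, rule mult_right_mono) (use F_ge_Phi inv in blast, simp)
    also have "\<dots> = measure_pmf.expectation (samplingGreedy f m k l selM rsel ord) (Fobj f m k)"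
      unfolding SG integral_map_pmf by (rule integral_measure_pmf_real[OF fA, symmetric]) auto
    finally show ?thesis .
  qed
  ultimately show "measure_pmf.expectation (samplingGreedy f m k l selM rsel ord) (Fobj f m k)
           \<ge> (1 - 1 / exp 2) / 2 * OPT" by linarith
qed

end


theorem mainTheorem5:
  fixes \<Omega> :: "'a set" and n k l m :: nat and f :: "nat \<Rightarrow> 'a set \<Rightarrow> real"
    and selM :: "'a sg_state \<Rightarrow> ('a + nat) set"
    and rsel :: "nat \<Rightarrow> 'a + nat \<Rightarrow> ('a + nat) set \<Rightarrow> 'a + nat"
    and ord :: "('a + nat) list" and Opt :: "'a set"
  assumes fin: "finite \<Omega>" and n_def: "card \<Omega> = n"
    and k1: "k \<ge> 1" and l1: "l \<ge> 1"
    and nonneg: "\<And>i A. i < m \<Longrightarrow> A \<subseteq> \<Omega> \<Longrightarrow> f i A \<ge> 0"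
    and mono: "\<And>i A B. i < m \<Longrightarrow> A \<subseteq> B \<Longrightarrow> B \<subseteq> \<Omega> \<Longrightarrow> f i A \<le> f i B"
    and submod: "\<And>i A A' x. i < m \<Longrightarrow> A \<subseteq> A' \<Longrightarrow> A' \<subseteq> \<Omega> \<Longrightarrow> x \<in> \<Omega> \<Longrightarrow> x \<notin> A' \<Longrightarrow>
                   f i (insert x A) - f i A \<ge> f i (insert x A') - f i A'"
    and selM_ok: "validSelM f m k \<Omega> l selM"
    and rsel_ok: "validRsel f rsel"
    and ord_ok: "distinct ord" "set ord = groundExt \<Omega> l"
    and O_sub: "Opt \<subseteq> \<Omega>" and O_card: "card Opt \<le> l"
    and O_opt: "\<And>S'. S' \<subseteq> \<Omega> \<Longrightarrow> card S' \<le> l \<Longrightarrow> Fobj f m k S' \<le> Fobj f m k Opt"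
  shows "(\<forall>S \<in> set_pmf (samplingGreedy f m k l selM rsel ord). S \<subseteq> \<Omega> \<and> card S \<le> l)
       \<and> measure_pmf.expectation (samplingGreedy f m k l selM rsel ord) (Fobj f m k)
           \<ge> (1 - 1 / exp 2) / 2 * Fobj f m k Opt"
  proof -
  interpret sgl2 \<Omega> k l m f selM rsel ord Opt
    by unfold_locales (use fin k1 l1 nonneg mono submod selM_ok rsel_ok O_sub O_card in auto)
  show ?thesis using final .
qed

end
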